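(* $(\mathfrak{ss}_e^{\varepsilon})^\perp=\aleph_0$ for every $\varepsilon>0$.
   Context: Let $\mathfrak S_{cc}$ be the set of all sequences $\mathbf a=\langle a_i:i\in\omega\rangle$ of rational numbers with $a_i\to0$ such that $\sum_i a_i$ is conditionally convergent (converges to a real number, with the positive terms summing to $+\infty$ and the negative terms to $-\infty$). Let $[\omega]^\omega_\omega$ be the set of infinite coinfinite subsets of $\omega$; for such $X$ with increasing enumeration $\langle i_n\rangle$, $\sum_X\mathbf a$ denotes $\sum_n a_{i_n}$. For $\varepsilon>0$, $(\mathfrak{ss}_e^{\varepsilon})^\perp$ is the least cardinality of a family $\mathcal A\subseteq\mathfrak S_{cc}$ such that there is no $X\in[\omega]^\omega_\omega$ for which, for every $\mathbf a\in\mathcal A$, $\sum_X\mathbf a$ converges to a limit in the open interval $(\sum\mathbf a-\varepsilon,\sum\mathbf a+\varepsilon)$. *)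

theory Defs
  imports "HOL-Analysis.Analysis" "HOL-Library.Infinite_Set"
begin

text \<open>Rational sequences tending to 0 whose series converges conditionally:
  the series converges to a real number, the positive parts sum to +infinity
  and the negative parts sum to -infinity.\<close>
definition S_cc :: "(nat \<Rightarrow> rat) set" where
  "S_cc = {a. (\<lambda>i. real_of_rat (a i)) \<longlonglongrightarrow> 0
             \<and> summable (\<lambda>i. real_of_rat (a i))
             \<and> filterlim (\<lambda>n. \<Sum>i<n. max 0 (real_of_rat (a i))) at_top sequentially
             \<and> filterlim (\<lambda>n. \<Sum>i<n. min 0 (real_of_rat (a i))) at_bot sequentially}"

definition inf_coinf :: "nat set set" where
  "inf_coinf = {X. infinite X \<and> infinite (- X)}"

definition good_sub :: "real \<Rightarrow> nat set \<Rightarrow> (nat \<Rightarrow> rat) \<Rightarrow> bool" where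
  "good_sub \<epsilon> X a \<longleftrightarrow> (\<exists>L. (\<lambda>n. real_of_rat (a (enumerate X n))) sums L
        \<and> suminf (\<lambda>i. real_of_rat (a i)) - \<epsilon> < L \<and> L < suminf (\<lambda>i. real_of_rat (a i)) + \<epsilon>)"

definition ss_perp_family :: "real \<Rightarrow> (nat \<Rightarrow> rat) set \<Rightarrow> bool" where
  "ss_perp_family \<epsilon> \<A> \<longleftrightarrow> \<A> \<subseteq> S_cc \<and> \<not> (\<exists>X\<in>inf_coinf. \<forall>a\<in>\<A>. good_sub \<epsilon> X a)"

text \<open>The least cardinality of such a family equals aleph_0: some witnessing family has
  cardinality aleph_0 (= natLeq), and every witnessing family has cardinality at least aleph_0.\<close>
definition ss_perp_is_aleph0 :: "real \<Rightarrow> bool" where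
  "ss_perp_is_aleph0 \<epsilon> \<longleftrightarrow>
     (\<exists>\<A>. ss_perp_family \<epsilon> \<A> \<and> (card_of \<A>, natLeq) \<in> ordIso)
   \<and> (\<forall>\<A>. ss_perp_family \<epsilon> \<A> \<longrightarrow> (natLeq, card_of \<A>) \<in> ordLeq)"

end

theory Submission
  imports Defs
begin

definition dq :: "nat \<Rightarrow> rat" where
  "dq i = (-1)^i * (1 / of_nat (i div 2 + 1))"

definition dr :: "nat \<Rightarrow> real" where
  "dr i = (-1)^i * (1 / real (i div 2 + 1))"

lemma dq_dr: "real_of_rat (dq i) = dr i"
  by (simp add: dq_def dr_def of_rat_mult of_rat_divide of_rat_power of_rat_add)

lemma dr_abs: "\<bar>dr i\<bar> \<le> 1"
  by (simp add: dr_def abs_mult power_abs)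

lemma aux_tendsto: "(\<lambda>i. 1 / real (i div 2 + 1)) \<longlonglongrightarrow> 0"
proof (rule LIMSEQ_I)
  fix r :: real assume r: "0 < r"
  obtain N :: nat where N: "1 / r < real N" using reals_Archimedean2 by blast
  show "\<exists>no. \<forall>n\<ge>no. norm (1 / real (n div 2 + 1) - 0) < r"
  proof (intro exI allI impI)
    fix n assume "2 * N \<le> n"
    then have "N \<le> n div 2" by linarith
    then have "real N < real (n div 2 + 1)" by simp
    then have "1 / r < real (n div 2 + 1)" using N by linarith
    then show "norm (1 / real (n div 2 + 1) - 0) < r" using r
      by (simp add: field_simps)
  qed
qed

lemma dr_tendsto: "dr \<longlonglongrightarrow> 0"
proof -
  have "(\<lambda>i. norm (dr i)) = (\<lambda>i. 1 / real (i div 2 + 1))"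
    by (simp add: dr_def abs_mult power_abs)
  then show ?thesis using aux_tendsto tendsto_norm_zero_iff[of dr sequentially] by simp
qed

lemma dr_summable: "summable dr"
proof -
  have "summable (\<lambda>n. (-1)^n * (1 / real (n div 2 + 1)))"
  proof (rule summable_Leibniz'(1))
    show "(\<lambda>i. 1 / real (i div 2 + 1)) \<longlonglongrightarrow> 0" by (rule aux_tendsto)
    show "\<And>n. 0 \<le> 1 / real (n div 2 + 1)" by simp
    show "\<And>n. 1 / real (Suc n div 2 + 1) \<le> 1 / real (n div 2 + 1)"
      by (intro divide_left_mono) (auto simp: div_le_mono)
  qed
  then show ?thesis by (simp add: dr_def[abs_def])
qed

lemma pos_even: "(\<Sum>i<2*m. max 0 (dr i)) = harm m"
proof (induction m)
  case 0 then show ?case by (simp add: harm_def)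
next
  case (Suc m)
  have e: "2 * Suc m = Suc (Suc (2*m))" by simp
  have "(\<Sum>i<2*Suc m. max 0 (dr i)) = (\<Sum>i<2*m. max 0 (dr i)) + max 0 (dr (2*m)) + max 0 (dr (Suc (2*m)))"
    unfolding e by simp
  also have "max 0 (dr (2*m)) = inverse (real (Suc m))" by (simp add: dr_def field_simps)
  also have "max 0 (dr (Suc (2*m))) = 0" by (simp add: dr_def)
  finally show ?case using Suc by (simp add: harm_Suc)
qed

lemma neg_even: "(\<Sum>i<2*m. min 0 (dr i)) = - harm m"
proof (induction m)
  case 0 then show ?case by (simp add: harm_def)
next
  case (Suc m)
  have e: "2 * Suc m = Suc (Suc (2*m))" by simp
  have "(\<Sum>i<2*Suc m. min 0 (dr i)) = (\<Sum>i<2*m. min 0 (dr i)) + min 0 (dr (2*m)) + min 0 (dr (Suc (2*m)))"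
    unfolding e by simp
  also have "min 0 (dr (2*m)) = 0" by (simp add: dr_def)
  also have "min 0 (dr (Suc (2*m))) = - inverse (real (Suc m))" by (simp add: dr_def field_simps)
  finally show ?case using Suc by (simp add: harm_Suc)
qed

lemma pos_top: "filterlim (\<lambda>n. \<Sum>i<n. max 0 (dr i)) at_top sequentially"
proof (subst filterlim_at_top, intro allI)
  fix Z :: real
  from harm_at_top have "eventually (\<lambda>m. Z \<le> (harm m :: real)) sequentially"
    by (simp add: filterlim_at_top)
  then obtain M where M: "Z \<le> (harm M :: real)" by (auto simp: eventually_sequentially)
  show "eventually (\<lambda>n. Z \<le> (\<Sum>i<n. max 0 (dr i))) sequentially"
    unfolding eventually_sequentially
  proof (intro exI allI impI)
    fix n assume "2*M \<le> n"
    then have "(\<Sum>i<2*M. max 0 (dr i)) \<le> (\<Sum>i<n. max 0 (dr i))"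
      by (intro sum_mono2) auto
    then show "Z \<le> (\<Sum>i<n. max 0 (dr i))" using M pos_even[of M] by simp
  qed
qed

lemma neg_bot: "filterlim (\<lambda>n. \<Sum>i<n. min 0 (dr i)) at_bot sequentially"
proof (subst filterlim_at_bot, intro allI)
  fix Z :: real
  from harm_at_top have "eventually (\<lambda>m. - Z \<le> (harm m :: real)) sequentially"
    by (simp add: filterlim_at_top)
  then obtain M where M: "- Z \<le> (harm M :: real)" by (auto simp: eventually_sequentially)
  show "eventually (\<lambda>n. (\<Sum>i<n. min 0 (dr i)) \<le> Z) sequentially"
    unfolding eventually_sequentially
  proof (intro exI allI impI)
    fix n assume "2*M \<le> n"
    then have "(\<Sum>i<2*M. - min 0 (dr i)) \<le> (\<Sum>i<n. - min 0 (dr i))"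
      by (intro sum_mono2) auto
    then show "(\<Sum>i<n. min 0 (dr i)) \<le> Z" using M neg_even[of M] by (simp add: sum_negf)
  qed
qed


lemma sub_sums:
  assumes "infinite X"
  shows "(\<lambda>n. f (enumerate X n)) sums L \<longleftrightarrow> (\<lambda>i. if i \<in> X then f i else (0::real)) sums L"
proof -
  have "(\<lambda>n. (\<lambda>i. if i \<in> X then f i else 0) (enumerate X n)) sums L \<longleftrightarrow> (\<lambda>i. if i \<in> X then f i else (0::real)) sums L"
    by (rule sums_mono_reindex) (auto simp: strict_mono_enumerate range_enumerate assms)
  moreover have "(\<lambda>n. (\<lambda>i. if i \<in> X then f i else 0) (enumerate X n)) = (\<lambda>n. f (enumerate X n))"
    using enumerate_in_set[OF assms] by auto
  ultimately show ?thesis by simp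
qed

definition fam :: "rat \<Rightarrow> nat \<Rightarrow> nat \<Rightarrow> rat" where
  "fam q m i = dq i + (if i = m then q else 0)"

lemma fam_real: "real_of_rat (fam q m i) = dr i + (if i = m then real_of_rat q else 0)"
  by (simp add: fam_def of_rat_add dq_dr)

lemma fam_Scc:
  assumes q: "0 \<le> real_of_rat q"
  shows "fam q m \<in> S_cc"
proof -
  let ?e = "\<lambda>i. if i = m then real_of_rat q else 0"
  have es: "?e sums real_of_rat q" using sums_single[of m "\<lambda>_. real_of_rat q"] by simp
  have fr: "(\<lambda>i. real_of_rat (fam q m i)) = (\<lambda>i. dr i + ?e i)" by (simp add: fam_real)
  have t: "(\<lambda>i. dr i + ?e i) \<longlonglongrightarrow> 0"
    using tendsto_add[OF dr_tendsto summable_LIMSEQ_zero[OF sums_summable[OF es]]] by simp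
  have s: "summable (\<lambda>i. dr i + ?e i)"
    using summable_add[OF dr_summable sums_summable[OF es]] .
  have p: "filterlim (\<lambda>n. \<Sum>i<n. max 0 (dr i + ?e i)) at_top sequentially"
  proof (rule filterlim_at_top_mono[OF pos_top], rule always_eventually, intro allI)
    fix n show "(\<Sum>i<n. max 0 (dr i)) \<le> (\<Sum>i<n. max 0 (dr i + ?e i))"
    proof (rule sum_mono)
      fix i have "0 \<le> ?e i" using q by simp
      then show "max 0 (dr i) \<le> max 0 (dr i + ?e i)" by linarith
    qed
  qed
  have b: "(\<Sum>i<n. min 0 (dr i + ?e i)) \<le> (\<Sum>i<n. min 0 (dr i)) + real_of_rat q" for n
  proof -
    have "(\<Sum>i<n. min 0 (dr i + ?e i)) \<le> (\<Sum>i<n. min 0 (dr i) + ?e i)"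
    proof (rule sum_mono)
      fix i have "0 \<le> ?e i" using q by simp
      then show "min 0 (dr i + ?e i) \<le> min 0 (dr i) + ?e i" by linarith
    qed
    also have "\<dots> = (\<Sum>i<n. min 0 (dr i)) + (\<Sum>i<n. ?e i)" by (simp add: sum.distrib)
    also have "(\<Sum>i<n. ?e i) \<le> real_of_rat q"
      using q by (cases "m < n") auto
    finally show ?thesis by simp
  qed
  have ng: "filterlim (\<lambda>n. \<Sum>i<n. min 0 (dr i + ?e i)) at_bot sequentially"
  proof (subst filterlim_at_bot, intro allI)
    fix Z :: real
    from neg_bot have "eventually (\<lambda>n. (\<Sum>i<n. min 0 (dr i)) \<le> Z - real_of_rat q) sequentially"
      by (simp add: filterlim_at_bot)
    then show "eventually (\<lambda>n. (\<Sum>i<n. min 0 (dr i + ?e i)) \<le> Z) sequentially"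
      proof eventually_elim
      case (elim n)
      show ?case using b[of n] elim by linarith
    qed
  qed
  show ?thesis unfolding S_cc_def mem_Collect_eq fam_real using t s p ng by blast
qed

lemma fam_suminf: "suminf (\<lambda>i. real_of_rat (fam q m i)) = suminf dr + real_of_rat q"
proof -
  have es: "(\<lambda>i. if i = m then real_of_rat q else 0) sums real_of_rat q"
    using sums_single[of m "\<lambda>_. real_of_rat q"] by simp
  have "(\<lambda>i. real_of_rat (fam q m i)) sums (suminf dr + real_of_rat q)"
    unfolding fam_real by (rule sums_add[OF summable_sums[OF dr_summable] es])
  then show ?thesis by (rule sums_unique[symmetric])
qed

lemma fam_bad:
  assumes q: "2 * \<epsilon> < real_of_rat q" and X: "X \<in> inf_coinf"
  shows "\<not> (\<forall>m. good_sub \<epsilon> X (fam q m))"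
proof
  assume all: "\<forall>m. good_sub \<epsilon> X (fam q m)"
  have iX: "infinite X" and icX: "infinite (- X)" using X by (auto simp: inf_coinf_def)
  obtain m1 where m1: "m1 \<in> X" using iX infinite_imp_nonempty by blast
  obtain m2 where m2: "m2 \<in> - X" using icX infinite_imp_nonempty by blast
  define S where "S = suminf dr"
  define rq where "rq = real_of_rat q"
  define g where "g = (\<lambda>i. if i \<in> X then dr i else 0)"
  have G1: "good_sub \<epsilon> X (fam q m1)" using all by blast
  obtain L1 where L1: "(\<lambda>n. real_of_rat (fam q m1 (enumerate X n))) sums L1"
     "S + rq - \<epsilon> < L1" "L1 < S + rq + \<epsilon>"
    using G1 unfolding good_sub_def fam_suminf S_def rq_def by blast
  have G2: "good_sub \<epsilon> X (fam q m2)" using all by blast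
  obtain L2 where L2: "(\<lambda>n. real_of_rat (fam q m2 (enumerate X n))) sums L2"
     "S + rq - \<epsilon> < L2" "L2 < S + rq + \<epsilon>"
    using G2 unfolding good_sub_def fam_suminf S_def rq_def by blast
  have L1': "(\<lambda>i. if i \<in> X then real_of_rat (fam q m1 i) else 0) sums L1"
    using L1(1) sub_sums[OF iX, of "\<lambda>i. real_of_rat (fam q m1 i)"] by simp
  have L2': "(\<lambda>i. if i \<in> X then real_of_rat (fam q m2 i) else 0) sums L2"
    using L2(1) sub_sums[OF iX, of "\<lambda>i. real_of_rat (fam q m2 i)"] by simp
  have e1: "(\<lambda>i. if i \<in> X then real_of_rat (fam q m1 i) else 0) = (\<lambda>i. g i + (if i = m1 then rq else 0))"
  proof
    fix i show "(if i \<in> X then real_of_rat (fam q m1 i) else 0) = g i + (if i = m1 then rq else 0)"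
      using m1 unfolding g_def rq_def fam_real by auto
  qed
  have e2: "(\<lambda>i. if i \<in> X then real_of_rat (fam q m2 i) else 0) = g"
  proof
    fix i show "(if i \<in> X then real_of_rat (fam q m2 i) else 0) = g i"
      using m2 unfolding g_def fam_real by auto
  qed
  have sg: "(\<lambda>i. if i = m1 then rq else 0) sums rq" using sums_single[of m1 "\<lambda>_. rq"] by simp
  have "(\<lambda>i. (g i + (if i = m1 then rq else 0)) - (if i = m1 then rq else 0)) sums (L1 - rq)"
    using sums_diff[OF L1'[unfolded e1] sg] .
  then have "g sums (L1 - rq)" by simp
  moreover have "g sums L2" using L2' e2 by simp
  ultimately have "L1 - rq = L2" using sums_unique2 by blast
  then show False using L1 L2 q unfolding rq_def by linarith
qed


primrec kseq :: "(nat \<Rightarrow> nat) \<Rightarrow> nat \<Rightarrow> nat" where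
  "kseq N 0 = N 0"
| "kseq N (Suc j) = max (kseq N j + 2) (N (Suc j))"

lemma kseq_ge: "N j \<le> kseq N j"
  by (cases j) auto

lemma kseq_mono: "strict_mono (kseq N)"
  by (rule strict_mono_Suc_iff[THEN iffD2]) auto

lemma kseq_gap: "kseq N j + 1 \<notin> range (kseq N)"
proof
  assume "kseq N j + 1 \<in> range (kseq N)"
  then obtain i where i: "kseq N i = kseq N j + 1" by auto
  show False
  proof (cases "i \<le> j")
    case True
    then have "kseq N i \<le> kseq N j" using kseq_mono strict_mono_less_eq by blast
    then show False using i by simp
  next
    case False
    then have "Suc j \<le> i" by simp
    then have "kseq N (Suc j) \<le> kseq N i" using kseq_mono strict_mono_less_eq by blast
    then show False using i by simp
  qed
qed

lemma finite_good:
  assumes e: "\<epsilon> > 0" and fin: "finite \<A>" and sub: "\<A> \<subseteq> S_cc"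
  shows "\<exists>X\<in>inf_coinf. \<forall>a\<in>\<A>. good_sub \<epsilon> X a"
proof -
  define c where "c = \<epsilon> / 4"
  have c: "c > 0" using e by (simp add: c_def)
  have ev: "\<exists>M. \<forall>i\<ge>M. \<forall>a\<in>\<A>. \<bar>real_of_rat (a i)\<bar> < c * (1/2)^j" for j
  proof -
    have "\<forall>a\<in>\<A>. eventually (\<lambda>i. \<bar>real_of_rat (a i)\<bar> < c * (1/2)^j) sequentially"
    proof
      fix a assume "a \<in> \<A>"
      then have t: "(\<lambda>i. real_of_rat (a i)) \<longlonglongrightarrow> 0" using sub by (auto simp: S_cc_def)
      have "c * (1/2)^j > 0" using c by simp
      from tendstoD[OF t this] show "eventually (\<lambda>i. \<bar>real_of_rat (a i)\<bar> < c * (1/2)^j) sequentially"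
        by (simp add: dist_real_def)
    qed
    then have "eventually (\<lambda>i. \<forall>a\<in>\<A>. \<bar>real_of_rat (a i)\<bar> < c * (1/2)^j) sequentially"
      by (rule eventually_ball_finite[OF fin])
    then show ?thesis by (simp add: eventually_sequentially)
  qed
  have "\<forall>j. \<exists>M. \<forall>i\<ge>M. \<forall>a\<in>\<A>. \<bar>real_of_rat (a i)\<bar> < c * (1/2)^j"
    by (intro allI ev)
  then have "\<exists>N. \<forall>j. \<forall>i\<ge>N j. \<forall>a\<in>\<A>. \<bar>real_of_rat (a i)\<bar> < c * (1/2)^j"
    by (rule choice)
  then obtain N where N0: "\<forall>j. \<forall>i\<ge>N j. \<forall>a\<in>\<A>. \<bar>real_of_rat (a i)\<bar> < c * (1/2)^j"
    by blast
  have N: "\<And>j i a. i \<ge> N j \<Longrightarrow> a \<in> \<A> \<Longrightarrow> \<bar>real_of_rat (a i)\<bar> < c * (1/2)^j"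
    using N0 by (simp only: atomize_imp atomize_all) simp
  define k where "k = kseq N"
  define X where "X = - range k"
  have km: "strict_mono k" using kseq_mono k_def by simp
  have kinj: "inj k" using km strict_mono_imp_inj_on by blast
  have "infinite (range k)" using kinj range_inj_infinite by blast
  then have icX: "infinite (- X)" by (simp add: X_def)
  have "range (\<lambda>j. k j + 1) \<subseteq> X" using kseq_gap k_def X_def by auto
  moreover have "infinite (range (\<lambda>j. k j + 1))"
    by (rule range_inj_infinite) (use kinj in \<open>auto simp: inj_def\<close>)
  ultimately have iX: "infinite X" using finite_subset by blast
  have XI: "X \<in> inf_coinf" using iX icX by (simp add: inf_coinf_def)
  have "good_sub \<epsilon> X a" if a: "a \<in> \<A>" for a
  proof -
    define f where "f = (\<lambda>i. real_of_rat (a i))"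
    have fs: "summable f" using a sub by (auto simp: S_cc_def f_def)
    define g where "g = (\<lambda>j. c * (1/2::real)^j)"
    have gs: "g sums (c * 2)" unfolding g_def
      using sums_mult[OF geometric_sums[of "1/2::real"], of c] by simp
    have bd: "\<bar>f (k j)\<bar> \<le> g j" for j
      using N[of j "k j" a] a kseq_ge[of N j] unfolding k_def f_def g_def by simp
    have bd2: "- g j \<le> f (k j) \<and> f (k j) \<le> g j" for j
      using bd[of j] by (auto simp: abs_le_iff)
    have fks: "summable (\<lambda>j. f (k j))"
      by (rule summable_comparison_test'[OF sums_summable[OF gs], of 0]) (use bd in simp)
    define T where "T = suminf (\<lambda>j. f (k j))"
    have Ts: "(\<lambda>j. f (k j)) sums T" using fks T_def summable_sums by blast
    have T1: "T \<le> c * 2"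
      by (rule sums_le[OF _ Ts gs]) (use bd2 in blast)
    have gs': "(\<lambda>j. - g j) sums (- (c * 2))" using sums_minus[OF gs] .
    have T2: "- (c * 2) \<le> T"
      by (rule sums_le[OF _ gs' Ts]) (use bd2 in blast)
    define b where "b = (\<lambda>i. if i \<in> range k then f i else 0)"
    have "(\<lambda>j. b (k j)) sums T \<longleftrightarrow> b sums T"
      by (rule sums_mono_reindex[OF km]) (simp add: b_def)
    moreover have "(\<lambda>j. b (k j)) = (\<lambda>j. f (k j))" by (simp add: b_def)
    ultimately have bs: "b sums T" using Ts by simp
    have "(\<lambda>i. f i - b i) sums (suminf f - T)"
      by (rule sums_diff[OF summable_sums[OF fs] bs])
    moreover have "(\<lambda>i. f i - b i) = (\<lambda>i. if i \<in> X then f i else 0)"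
      by (auto simp: b_def X_def)
    ultimately have "(\<lambda>i. if i \<in> X then f i else 0) sums (suminf f - T)" by simp
    then have "(\<lambda>n. f (enumerate X n)) sums (suminf f - T)" using sub_sums[OF iX] by blast
    moreover have "suminf f - \<epsilon> < suminf f - T" "suminf f - T < suminf f + \<epsilon>"
      using T1 T2 c unfolding c_def by linarith+
    ultimately show ?thesis unfolding good_sub_def f_def by blast
  qed
  then show ?thesis using XI by blast
qed


theorem mainTheorem13:
  fixes \<epsilon> :: real
  assumes "\<epsilon> > 0"
  shows "ss_perp_is_aleph0 \<epsilon>"
proof -
  define q :: rat where "q = of_int \<lceil>2 * \<epsilon>\<rceil> + 1"
  have rq: "real_of_rat q = of_int \<lceil>2 * \<epsilon>\<rceil> + 1" by (simp add: q_def of_rat_add)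
  have q2: "2 * \<epsilon> < real_of_rat q" using rq by linarith
  have q0: "0 \<le> real_of_rat q" using q2 assms by linarith
  have qn: "q \<noteq> 0" using q2 assms by auto
  have fam1: "ss_perp_family \<epsilon> (range (fam q))"
    unfolding ss_perp_family_def
  proof
    show "range (fam q) \<subseteq> S_cc" using fam_Scc[OF q0] by blast
    show "\<not> (\<exists>X\<in>inf_coinf. \<forall>a\<in>range (fam q). good_sub \<epsilon> X a)"
      using fam_bad[OF q2] by blast
  qed
  have inj: "inj (fam q)"
  proof (rule injI)
    fix m m' assume h: "fam q m = fam q m'"
    show "m = m'"
    proof (rule ccontr)
      assume "m \<noteq> m'"
      then have "fam q m m \<noteq> fam q m' m" using qn by (simp add: fam_def)
      then show False using h by simp
    qed
  qed
  have "bij_betw (fam q) UNIV (range (fam q))" using inj by (simp add: bij_betw_def)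
  then have "(card_of (UNIV :: nat set), card_of (range (fam q))) \<in> ordIso" using card_of_ordIso by blast
  then have card1: "(card_of (range (fam q)), natLeq) \<in> ordIso"
    using card_of_nat ordIso_symmetric ordIso_transitive by blast
  have part2: "(natLeq, card_of \<A>) \<in> ordLeq" if h: "ss_perp_family \<epsilon> \<A>" for \<A>
  proof -
    have "infinite \<A>"
    proof
      assume "finite \<A>"
      then show False using finite_good[OF assms] h unfolding ss_perp_family_def by blast
    qed
    then show ?thesis using infinite_iff_natLeq_ordLeq by blast
  qed
  show ?thesis unfolding ss_perp_is_aleph0_def using fam1 card1 part2 by blast
qed

end
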